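(* Let $\varphi\neq0$ and $\phi$ be real numbers and $$M_A=\begin{pmatrix} i\cosh\varphi & e^{i\phi}\sinh\varphi\\ e^{-i\phi}\sinh\varphi & -i\cosh\varphi\end{pmatrix},\qquad M_B=\begin{pmatrix} i&0\\0&-i\end{pmatrix}.$$ Let $M_1,M_2,\dots$ be independent random matrices, each equal to $M_A$ or $M_B$ with probability $1/2$, and write $\Pi_n=M_1\cdots M_n=\begin{pmatrix}\alpha_n&\beta_n\\ \beta_n^*&\alpha_n^*\end{pmatrix}$. Then for every integer $k\ge1$, $$\mathbb{E}\left(|\alpha_{2k-1}|^2+|\beta_{2k-1}|^2\right)=\mathbb{E}\left(|\alpha_{2k}|^2+|\beta_{2k}|^2\right)=(\cosh\varphi)^{2k},$$ and consequently $\lim_{n\to\infty}\frac{1}{2n}\log\mathbb{E}\left(|\alpha_n|^2+|\beta_n|^2\right)=\frac12\log\cosh\varphi>0$.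
   Context: $\mathbb{E}$ denotes expectation over the random choices of $M_1,\dots,M_n$. The matrices $M_A,M_B$ lie in $\operatorname{SU}(1,1)$ and are traceless (reflection matrices). *)

theory Defs
  imports "HOL-Analysis.Analysis" "HOL-Probability.Probability"
begin

definition MA :: "real \<Rightarrow> real \<Rightarrow> complex^2^2" where
  "MA \<phi>' \<phi> = vector [vector [\<i> * of_real (cosh \<phi>'), cis \<phi> * of_real (sinh \<phi>')],
                     vector [cis (-\<phi>) * of_real (sinh \<phi>'), - \<i> * of_real (cosh \<phi>')]]"

definition MB :: "complex^2^2" where
  "MB = vector [vector [\<i>, 0], vector [0, - \<i>]]"

definition Pi_prod :: "real \<Rightarrow> real \<Rightarrow> bool list \<Rightarrow> complex^2^2" where
  "Pi_prod \<phi>' \<phi> cs = foldr (\<lambda>c P. (if c then MA \<phi>' \<phi> else MB) ** P) cs (mat 1)"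

definition Enorm :: "real \<Rightarrow> real \<Rightarrow> nat \<Rightarrow> real" where
  "Enorm \<phi>' \<phi> n = measure_pmf.expectation (pmf_of_set {cs :: bool list. length cs = n})
     (\<lambda>cs. (cmod (Pi_prod \<phi>' \<phi> cs $ 1 $ 1))\<^sup>2 + (cmod (Pi_prod \<phi>' \<phi> cs $ 1 $ 2))\<^sup>2)"

end

theory Submission
  imports Defs "HOL-Real_Asymp.Real_Asymp"
begin



lemma Pi_Cons: "Pi_prod p q (c#cs) = (if c then MA p q else MB) ** Pi_prod p q cs"
  by (simp add: Pi_prod_def)

lemma struct: "Pi_prod p q cs $ 2 $ 1 = cnj (Pi_prod p q cs $ 1 $ 2) \<and> Pi_prod p q cs $ 2 $ 2 = cnj (Pi_prod p q cs $ 1 $ 1)"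
proof (induction cs)
  case Nil then show ?case by (simp add: Pi_prod_def mat_def)
next
  case (Cons c cs)
  then show ?case
    by (auto simp add: Pi_Cons matrix_matrix_mult_def sum_2 MA_def MB_def cis_cnj)
qed

lemma stepA: "Pi_prod p q (True#cs) $ 1 $ 1 = \<i> * cosh p * Pi_prod p q cs $ 1 $ 1 + cis q * sinh p * cnj (Pi_prod p q cs $ 1 $ 2)"
  "Pi_prod p q (True#cs) $ 1 $ 2 = \<i> * cosh p * Pi_prod p q cs $ 1 $ 2 + cis q * sinh p * cnj (Pi_prod p q cs $ 1 $ 1)"
  using struct[of p q cs]
  by (auto simp add: Pi_Cons matrix_matrix_mult_def sum_2 MA_def)

lemma stepB: "Pi_prod p q (False#cs) $ 1 $ 1 = \<i> * Pi_prod p q cs $ 1 $ 1"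
  "Pi_prod p q (False#cs) $ 1 $ 2 = \<i> * Pi_prod p q cs $ 1 $ 2"
  by (auto simp add: Pi_Cons matrix_matrix_mult_def sum_2 MB_def)

lemma nsq: "(complex_of_real (cmod z))^2 = z * cnj z"
  by (metis complex_norm_square of_real_power)

lemma alg1:
  fixes a b e :: complex and c s :: real
  assumes "e * cnj e = 1"
  shows "(cmod (\<i> * c * a + e * s * cnj b))^2 + (cmod (\<i> * c * b + e * s * cnj a))^2
     = (c^2 + s^2) * ((cmod a)^2 + (cmod b)^2) - 4 * c * s * Im (cnj e * a * b)"
proof -
  have "complex_of_real ((cmod (\<i> * c * a + e * s * cnj b))^2 + (cmod (\<i> * c * b + e * s * cnj a))^2)
     = complex_of_real ((c^2 + s^2) * ((cmod a)^2 + (cmod b)^2) - 4 * c * s * Im (cnj e * a * b))"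
  proof -
    have i: "complex_of_real (Im z) = (z - cnj z) / (2 * \<i>)" for z
      by (simp add: complex_eq_iff)
    show ?thesis
      apply (simp only: of_real_add of_real_mult of_real_diff of_real_power i nsq of_real_numeral)
      apply (simp only: complex_cnj_mult complex_cnj_add complex_cnj_complex_of_real complex_cnj_i complex_cnj_cnj complex_cnj_diff complex_cnj_minus)
      apply (simp add: field_simps)
      using assms by algebra
  qed
  then show ?thesis using of_real_eq_iff by blast
qed

lemma alg2:
  fixes a b e :: complex and c s :: real
  assumes "e * cnj e = 1"
  shows "Im (cnj e * (\<i> * c * a + e * s * cnj b) * (\<i> * c * b + e * s * cnj a))
     = c * s * ((cmod a)^2 + (cmod b)^2) - (c^2 + s^2) * Im (cnj e * a * b)"
proof -
  have i: "complex_of_real (Im z) = (z - cnj z) / (2 * \<i>)" for z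
    by (simp add: complex_eq_iff)
  have "complex_of_real (Im (cnj e * (\<i> * c * a + e * s * cnj b) * (\<i> * c * b + e * s * cnj a)))
     = complex_of_real (c * s * ((cmod a)^2 + (cmod b)^2) - (c^2 + s^2) * Im (cnj e * a * b))"
      apply (simp only: of_real_add of_real_mult of_real_diff of_real_power i nsq of_real_numeral)
      apply (simp only: complex_cnj_mult complex_cnj_add complex_cnj_complex_of_real complex_cnj_i complex_cnj_cnj complex_cnj_diff complex_cnj_minus)
      apply (simp add: field_simps)
      using assms by algebra
  then show ?thesis using of_real_eq_iff by blast
qed


lemma sum_lists_Suc:
  "sum f {cs::bool list. length cs = Suc n} = sum (\<lambda>cs. f (True#cs)) {cs. length cs = n} + sum (\<lambda>cs. f (False#cs)) {cs. length cs = n}"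
proof -
  let ?A = "{cs::bool list. length cs = n}"
  have fin: "finite ?A" using finite_lists_length_eq[of "UNIV::bool set" n] by simp
  have eq: "{cs::bool list. length cs = Suc n} = Cons True ` ?A \<union> Cons False ` ?A"
  proof (rule set_eqI)
    fix x :: "bool list"
    have "x \<in> Cons True ` ?A \<union> Cons False ` ?A" if "x = b # l" "length l = n" for b l
      using that by (cases b) auto
    then show "x \<in> {cs. length cs = Suc n} \<longleftrightarrow> x \<in> Cons True ` ?A \<union> Cons False ` ?A"
      by (cases x) auto
  qed
  have "sum f {cs::bool list. length cs = Suc n} = sum f (Cons True ` ?A) + sum f (Cons False ` ?A)"
    unfolding eq by (rule sum.union_disjoint) (use fin in auto)
  also have "\<dots> = sum (\<lambda>cs. f (True#cs)) ?A + sum (\<lambda>cs. f (False#cs)) ?A"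
    by (simp add: sum.reindex)
  finally show ?thesis .
qed

definition TT :: "real \<Rightarrow> real \<Rightarrow> bool list \<Rightarrow> real" where
  "TT p q cs = (cmod (Pi_prod p q cs $ 1 $ 1))\<^sup>2 + (cmod (Pi_prod p q cs $ 1 $ 2))\<^sup>2"
definition YY :: "real \<Rightarrow> real \<Rightarrow> bool list \<Rightarrow> real" where
  "YY p q cs = Im (cnj (cis q) * Pi_prod p q cs $ 1 $ 1 * Pi_prod p q cs $ 1 $ 2)"

lemma ee: "cis q * cnj (cis q) = 1"
  by (simp add: cis_cnj cis_mult)

lemma TT_True: "TT p q (True#cs) = ((cosh p)^2 + (sinh p)^2) * TT p q cs - 4 * cosh p * sinh p * YY p q cs"
  unfolding TT_def YY_def stepA by (rule alg1[OF ee])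
lemma YY_True: "YY p q (True#cs) = cosh p * sinh p * TT p q cs - ((cosh p)^2 + (sinh p)^2) * YY p q cs"
  unfolding TT_def YY_def stepA by (rule alg2[OF ee])
lemma TT_False: "TT p q (False#cs) = TT p q cs"
  unfolding TT_def stepB by (simp add: norm_mult)
lemma YY_False: "YY p q (False#cs) = - YY p q cs"
  unfolding YY_def stepB by (simp add: algebra_simps)

definition ST where "ST p q n = sum (TT p q) {cs::bool list. length cs = n}"
definition SY where "SY p q n = sum (YY p q) {cs::bool list. length cs = n}"

lemma ST_Suc: "ST p q (Suc n) = 2 * (cosh p)^2 * ST p q n - 4 * cosh p * sinh p * SY p q n"
proof -
  have c: "(cosh p)^2 + (sinh p)^2 + 1 = 2 * (cosh p)^2" using cosh_square_eq[of p] by simp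
  let ?A = "{cs::bool list. length cs = n}"
  have 1: "sum (\<lambda>cs. TT p q (True#cs)) ?A = ((cosh p)^2 + (sinh p)^2) * ST p q n - 4 * cosh p * sinh p * SY p q n"
    unfolding TT_True ST_def SY_def by (simp add: sum_subtractf sum_distrib_left)
  have 2: "sum (\<lambda>cs. TT p q (False#cs)) ?A = ST p q n"
    unfolding TT_False ST_def ..
  have "ST p q (Suc n) = ((cosh p)^2 + (sinh p)^2) * ST p q n - 4 * cosh p * sinh p * SY p q n + ST p q n"
    using 1 2 unfolding ST_def[of p q "Suc n"] sum_lists_Suc by simp
  also have "\<dots> = ((cosh p)^2 + (sinh p)^2 + 1) * ST p q n - 4 * cosh p * sinh p * SY p q n"
    by (simp add: algebra_simps)
  finally show ?thesis unfolding c .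
qed

lemma SY_Suc: "SY p q (Suc n) = cosh p * sinh p * ST p q n - 2 * (cosh p)^2 * SY p q n"
proof -
  have c: "(cosh p)^2 + (sinh p)^2 + 1 = 2 * (cosh p)^2" using cosh_square_eq[of p] by simp
  let ?A = "{cs::bool list. length cs = n}"
  have 1: "sum (\<lambda>cs. YY p q (True#cs)) ?A = cosh p * sinh p * ST p q n - ((cosh p)^2 + (sinh p)^2) * SY p q n"
    unfolding YY_True ST_def SY_def by (simp add: sum_subtractf sum_distrib_left)
  have 2: "sum (\<lambda>cs. YY p q (False#cs)) ?A = - SY p q n"
    unfolding YY_False SY_def by (simp add: sum_negf)
  have "SY p q (Suc n) = cosh p * sinh p * ST p q n - ((cosh p)^2 + (sinh p)^2) * SY p q n - SY p q n"
    using 1 2 unfolding SY_def[of p q "Suc n"] sum_lists_Suc by simp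
  also have "\<dots> = cosh p * sinh p * ST p q n - ((cosh p)^2 + (sinh p)^2 + 1) * SY p q n"
    by (simp add: algebra_simps)
  finally show ?thesis unfolding c .
qed

lemma aux: "(c::real)^2 = s^2+1 \<Longrightarrow> 2 * c^2 * (2 * c^2 * A) - 4 * c * s * (c * s * A) = 4 * c^2 * A"
  by algebra

lemma ST_0: "ST p q 0 = 1" and SY_0: "SY p q 0 = 0"
  by (simp_all add: ST_def SY_def TT_def YY_def Pi_prod_def mat_def)

lemma closed:
  "ST p q (2*k) = 2^(2*k) * (cosh p)^(2*k) \<and> SY p q (2*k) = 0"
proof (induction k)
  case 0 then show ?case by (simp add: ST_0 SY_0)
next
  case (Suc k)
  have c: "(cosh p)^2 = (sinh p)^2 + 1" by (rule cosh_square_eq)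
  have e: "2 * Suc k = Suc (Suc (2*k))" by simp
  have o1: "ST p q (Suc (2*k)) = 2 * (cosh p)^2 * (2^(2*k) * (cosh p)^(2*k))"
    using Suc.IH by (simp add: ST_Suc)
  have o2: "SY p q (Suc (2*k)) = cosh p * sinh p * (2^(2*k) * (cosh p)^(2*k))"
    using Suc.IH by (simp add: SY_Suc)
  have "ST p q (2 * Suc k) = 4 * (cosh p)^2 * (2^(2*k) * (cosh p)^(2*k))"
    unfolding e ST_Suc[of p q "Suc (2*k)"] o1 o2 by (rule aux[OF c])
  moreover have "SY p q (2 * Suc k) = 0"
    unfolding e SY_Suc[of p q "Suc (2*k)"] o1 o2 by (simp add: algebra_simps power2_eq_square)
  ultimately show ?case by (simp add: power_add power2_eq_square algebra_simps)
qed

lemma closed_odd: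
  "ST p q (2*k+1) = 2^(2*k+1) * (cosh p)^(2*k+2)"
  using closed[of p q k] by (simp add: ST_Suc algebra_simps power2_eq_square)

lemma ST_all: "ST p q n = 2^n * (cosh p)^(n + n mod 2)"
proof (cases "even n")
  case True then obtain k where "n = 2*k" by blast
  then show ?thesis using closed[of p q k] by simp
next
  case False then obtain k where "n = 2*k+1" using oddE by blast
  then show ?thesis using closed_odd[of p q k] by simp
qed

lemma Enorm_eq: "Enorm p q n = (cosh p)^(n + n mod 2)"
proof -
  let ?A = "{cs::bool list. length cs = n}"
  have fin: "finite ?A" using finite_lists_length_eq[of "UNIV::bool set" n] by simp
  have ne: "?A \<noteq> {}" by (rule ccontr) (use length_replicate[of n True] in blast)
  have card: "card ?A = 2^n" using card_lists_length_eq[of "UNIV::bool set" n] by simp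
  have "Enorm p q n = ST p q n / card ?A"
    unfolding Enorm_def ST_def TT_def by (rule integral_pmf_of_set[OF ne fin])
  then show ?thesis by (simp add: card ST_all)
qed


lemma mod_odd: "(k::nat) \<ge> 1 \<Longrightarrow> 2*k - 1 + (2*k - 1) mod 2 = 2*k"
proof -
  assume "k \<ge> 1"
  then obtain j where "k = Suc j" by (cases k) auto
  then show ?thesis by simp
qed

theorem mainTheorem5:
  fixes \<phi>' \<phi> :: real
  assumes "\<phi>' \<noteq> 0"
  shows "(\<forall>k::nat. k \<ge> 1 \<longrightarrow>
            Enorm \<phi>' \<phi> (2*k - 1) = (cosh \<phi>') ^ (2*k) \<and>
            Enorm \<phi>' \<phi> (2*k) = (cosh \<phi>') ^ (2*k))
       \<and> ((\<lambda>n. ln (Enorm \<phi>' \<phi> n) / (2 * real n)) \<longlonglongrightarrow> ln (cosh \<phi>') / 2)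
       \<and> ln (cosh \<phi>') / 2 > 0"
proof (intro conjI allI impI)
  fix k :: nat assume "k \<ge> 1"
  then show "Enorm \<phi>' \<phi> (2*k - 1) = (cosh \<phi>') ^ (2*k)"
    by (simp only: Enorm_eq mod_odd)
  show "Enorm \<phi>' \<phi> (2*k) = (cosh \<phi>') ^ (2*k)" by (simp add: Enorm_eq)
next
  have c1: "cosh \<phi>' > 1" using cosh_real_ge_1[of \<phi>'] assms cosh_real_one_iff[of \<phi>'] by linarith
  then show "ln (cosh \<phi>') / 2 > 0" by simp
next
  have c1: "cosh \<phi>' > 1" using cosh_real_ge_1[of \<phi>'] assms cosh_real_one_iff[of \<phi>'] by linarith
  define L where "L = ln (cosh \<phi>')"
  have L0: "L \<ge> 0" using c1 L_def by simp
  have eqn: "ln (Enorm \<phi>' \<phi> n) / (2 * real n) = L / 2 + L * (real (n mod 2) / (2 * real n))" if "n \<ge> 1" for n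
  proof -
    have "ln (Enorm \<phi>' \<phi> n) = real (n + n mod 2) * L"
      unfolding Enorm_eq L_def using c1 by (simp add: ln_realpow)
    then show ?thesis using that by (simp add: field_simps)
  qed
  have lo: "L / 2 \<le> L / 2 + L * (real (n mod 2) / (2 * real n))" for n
    using L0 by simp
  have hi: "L / 2 + L * (real (n mod 2) / (2 * real n)) \<le> L / 2 + L * (1 / (2 * real n))" for n
  proof -
    have h: "real (n mod 2) / (2 * real n) \<le> 1 / (2 * real n)"
      by (rule divide_right_mono) auto
    then show ?thesis using mult_left_mono[OF h L0] by simp
  qed
  have t: "(\<lambda>n. L / 2 + L * (1 / (2 * real n))) \<longlonglongrightarrow> L / 2 + L * 0"
  proof -
    have "(\<lambda>n. 1 / (2 * real n)) \<longlonglongrightarrow> 0" by real_asymp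
    then show ?thesis by (intro tendsto_add tendsto_mult tendsto_const)
  qed
  have "(\<lambda>n. L / 2 + L * (real (n mod 2) / (2 * real n))) \<longlonglongrightarrow> L / 2"
    by (rule real_tendsto_sandwich[where f="\<lambda>n. L / 2" and h="\<lambda>n. L / 2 + L * (1 / (2 * real n))"])
       (use lo hi t in auto)
  then show "(\<lambda>n. ln (Enorm \<phi>' \<phi> n) / (2 * real n)) \<longlonglongrightarrow> ln (cosh \<phi>') / 2"
    unfolding L_def[symmetric]
  proof (rule Lim_transform_eventually)
    show "eventually (\<lambda>n. L / 2 + L * (real (n mod 2) / (2 * real n)) = ln (Enorm \<phi>' \<phi> n) / (2 * real n)) sequentially"
      unfolding eventually_sequentially
      by (intro exI[of _ 1] allI impI) (rule eqn[symmetric])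
  qed
qed

end
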